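(* Let $\{\mathcal S,\mathcal C,\mathcal R,\mathcal K(t)\}$ with $\mathcal S=\{S_1,\dots,S_N\}$ be a weakly reversible non-autonomous mass-action system with bounded kinetics whose network consists of a single linkage class. Let $P$ be a positive stoichiometric compatibility class, and suppose there is $\delta>0$ such that $\liminf_{t\to\infty}\phi_i(t,x_0)>\delta$ for all $i\in\{1,\dots,N\}$ and all $x_0\in P$. Then there exists $\rho>0$ such that for every $x_0\in P$ and every $i\in\{1,\dots,N\}$, $$\rho<\liminf_{t\to\infty}\phi_i(t,x_0)\le\limsup_{t\to\infty}\phi_i(t,x_0)<1/\rho.$$
   Context: A chemical reaction network on species $S_1,\dots,S_N$ consists of a finite set $\mathcal C\subset\mathbb Z^N_{\ge0}$ of complexes and a finite set $\mathcal R$ of reactions $y\to y'$ with $y,y'\in\mathcal C$, $y\ne y'$, such that every species has positive coefficient in some complex and every complex appears in some reaction; reactions are $y_k\to y_k'$. The reaction diagram is the directed graph on $\mathcal C$ with an edge for each reaction; its connected components are linkage classes; the network is weakly reversible if each linkage class is strongly connected. A non-autonomous mass-action system with bounded kinetics has functions $\kappa_k:[0,\infty)\to\mathbb R$ and $\eta>0$ with $\eta<\kappa_k(t)<1/\eta$ for all $t\ge0$, $k$, and dynamics $\dot x=\sum_k\kappa_k(t)x^{y_k}(y_k'-y_k)$, with $x^y=\prod_ix_i^{y_i}$. The stoichiometric subspace is $S=\mathrm{span}\{y_k'-y_k\}$, and a positive stoichiometric compatibility class is a set of the form $(x_0+S)\cap\mathbb R^N_{>0}$ with $x_0\in\mathbb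 R^N_{>0}$. $\phi(t,x_0)$ denotes the solution with initial condition $x_0$ and $\phi_i$ its $i$th component. *)

theory Defs
  imports "HOL-Analysis.Analysis" "HOL-Library.Extended_Real"
begin

text \<open>Species are indexed by a finite type 'n (so N = CARD('n)); complexes are
  vectors in nat^'n; a reaction y -> y' is a pair (y, y'); states are real^'n.\<close>

type_synonym 'n complex_vec = "nat ^ 'n"
type_synonym 'n reaction = "'n complex_vec \<times> 'n complex_vec"

definition cvec :: "nat ^ 'n \<Rightarrow> real ^ 'n" where
  "cvec y = (\<chi> i. real (y $ i))"

definition reaction_network :: "('n::finite) complex_vec set \<Rightarrow> 'n reaction set \<Rightarrow> bool" where
  "reaction_network C R \<longleftrightarrow> finite C \<and> finite R \<and> R \<subseteq> C \<times> C
     \<and> (\<forall>(y, y') \<in> R. y \<noteq> y')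
     \<and> (\<forall>i. \<exists>y\<in>C. y $ i > 0)
     \<and> (\<forall>y\<in>C. \<exists>(a, b)\<in>R. y = a \<or> y = b)"

definition same_linkage_class :: "'n reaction set \<Rightarrow> 'n complex_vec \<Rightarrow> 'n complex_vec \<Rightarrow> bool" where
  "same_linkage_class R y y' \<longleftrightarrow> (y, y') \<in> (R \<union> R\<inverse>)\<^sup>*"

definition single_linkage_class :: "'n complex_vec set \<Rightarrow> 'n reaction set \<Rightarrow> bool" where
  "single_linkage_class C R \<longleftrightarrow> (\<forall>y\<in>C. \<forall>y'\<in>C. same_linkage_class R y y')"

definition weakly_reversible :: "'n complex_vec set \<Rightarrow> 'n reaction set \<Rightarrow> bool" where
  "weakly_reversible C R \<longleftrightarrow>
     (\<forall>y\<in>C. \<forall>y'\<in>C. same_linkage_class R y y' \<longrightarrow> (y, y') \<in> R\<^sup>*)"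

definition bounded_kinetics :: "'n reaction set \<Rightarrow> ('n reaction \<Rightarrow> real \<Rightarrow> real) \<Rightarrow> real \<Rightarrow> bool" where
  "bounded_kinetics R \<kappa> \<eta> \<longleftrightarrow> \<eta> > 0 \<and>
     (\<forall>k\<in>R. \<forall>t\<ge>0. \<eta> < \<kappa> k t \<and> \<kappa> k t < 1 / \<eta>)"

definition monomial :: "real ^ ('n::finite) \<Rightarrow> nat ^ 'n \<Rightarrow> real" where
  "monomial x y = (\<Prod>i\<in>UNIV. (x $ i) ^ (y $ i))"

definition mass_action_field ::
  "('n::finite) reaction set \<Rightarrow> ('n reaction \<Rightarrow> real \<Rightarrow> real) \<Rightarrow> real \<Rightarrow> real ^ 'n \<Rightarrow> real ^ 'n" where
  "mass_action_field R \<kappa> t x =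
     (\<Sum>k\<in>R. (\<kappa> k t * monomial x (fst k)) *\<^sub>R (cvec (snd k) - cvec (fst k)))"

definition stoich_subspace :: "('n::finite) reaction set \<Rightarrow> (real ^ 'n) set" where
  "stoich_subspace R = span ((\<lambda>k. cvec (snd k) - cvec (fst k)) ` R)"

definition positive_compat_class :: "('n::finite) reaction set \<Rightarrow> (real ^ 'n) set \<Rightarrow> bool" where
  "positive_compat_class R P \<longleftrightarrow>
     (\<exists>x0. (\<forall>i. x0 $ i > 0) \<and>
        P = {x. x - x0 \<in> stoich_subspace R \<and> (\<forall>i. x $ i > 0)})"

text \<open>phi is a (Caratheodory / integral-form) solution on [0,\<infinity>) with phi 0 = x0.\<close>
definition is_solution ::
  "('n::finite) reaction set \<Rightarrow> ('n reaction \<Rightarrow> real \<Rightarrow> real) \<Rightarrow> real ^ 'n \<Rightarrow> (real \<Rightarrow> real ^ 'n) \<Rightarrow> bool" where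
  "is_solution R \<kappa> x0 \<phi> \<longleftrightarrow>
     (\<forall>t\<ge>0. ((\<lambda>s. mass_action_field R \<kappa> s (\<phi> s)) has_integral (\<phi> t - x0)) {0..t})"

end

theory Submission
  imports Defs
begin


fun sq :: "real \<Rightarrow> nat \<Rightarrow> real" where
  "sq K 0 = 0"
| "sq K (Suc j) = sq K j + K * exp (sq K j) * (sq K j + 1)"

lemma sq_nonneg: "K \<ge> 0 \<Longrightarrow> sq K j \<ge> 0"
  by (induct j) auto

lemma sq_step: "K > 0 \<Longrightarrow> sq K j < sq K (Suc j)"
  using sq_nonneg[of K j] by simp

lemma sq_mono: assumes "K > 0" "i \<le> j" shows "sq K i \<le> sq K j"
  using assms(2)
proof (induct j)
  case (Suc j) then show ?case using sq_step[OF assms(1), of j] by (cases "i = Suc j") auto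
qed simp

lemma rtrancl_cross:
  assumes "(x,y) \<in> r\<^sup>*" "P x" "\<not> P y" shows "\<exists>p q. (p,q) \<in> r \<and> P p \<and> \<not> P q"
  using assms by (induct rule: rtrancl_induct) auto

lemma pigeon_gap:
  fixes C :: "'a set" and u :: "'a \<Rightarrow> real"
  assumes fin: "finite C" and ym: "ym \<in> C" and K: "K > 0"
    and M: "\<forall>y\<in>C. u y \<le> u ym"
  shows "\<exists>j < card C. \<not> (\<exists>y\<in>C. u ym - sq K (Suc j) \<le> u y \<and> u y < u ym - sq K j)"
proof (rule ccontr)
  assume "\<not> ?thesis"
  then have "\<forall>j\<in>{..<card C}. \<exists>y. y \<in> C \<and> u ym - sq K (Suc j) \<le> u y \<and> u y < u ym - sq K j" by auto
  then obtain f where f: "\<forall>j\<in>{..<card C}. f j \<in> C \<and> u ym - sq K (Suc j) \<le> u (f j) \<and> u (f j) < u ym - sq K j"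
    by metis
  have inj: "inj_on f {..<card C}"
  proof (rule inj_onI, rule ccontr)
    fix i j assume i: "i \<in> {..<card C}" and j: "j \<in> {..<card C}" and e: "f i = f j" and ne: "i \<noteq> j"
    { fix i j assume i: "i \<in> {..<card C}" and j: "j \<in> {..<card C}" and e: "f i = f j" and lt: "i < j"
      have "sq K (Suc i) \<le> sq K j" using sq_mono[OF K, of "Suc i" j] lt by simp
      have a: "u ym - sq K (Suc i) \<le> u (f i)" using f i by blast
      have b: "u (f j) < u ym - sq K j" using f j by blast
      from a b e \<open>sq K (Suc i) \<le> sq K j\<close> have False by simp }
    then show False using i j e ne by (metis linorder_neqE_nat)
  qed
  have sub: "f ` {..<card C} \<subseteq> C - {ym}"
  proof
    fix x assume "x \<in> f ` {..<card C}"
    then obtain j where j: "j < card C" "x = f j" by auto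
    then show "x \<in> C - {ym}" using f sq_nonneg[of K j] K by force
  qed
  have "card (f ` {..<card C}) \<le> card (C - {ym})" using sub fin by (intro card_mono) auto
  moreover have "card (f ` {..<card C}) = card C" using inj by (simp add: card_image)
  moreover have "card (C - {ym}) = card C - 1" using ym fin by simp
  moreover have "card C > 0" using ym fin card_gt_0_iff by auto
  ultimately show False by linarith
qed

lemma term_bound:
  fixes up uq a um w eta :: real
  assumes eta: "eta > 0" and w: "eta \<le> w" "w \<le> 1/eta" and up: "up \<le> um" and uq: "uq \<le> um"
    and a: "a \<le> um"
  shows "w * exp up * (uq - up) \<le> (1/eta) * (exp a * (exp (um - a) * (um - a + 1)))"
proof -
  define s where "s = um - a"
  have s0: "s \<ge> 0" using a s_def by simp
  have E1: "exp s * (s + 1) \<ge> s + 1" using s0 by (simp add: mult_le_cancel_right1)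
  have R0: "0 \<le> (1/eta) * (exp a * (exp s * (s + 1)))" using eta s0 by simp
  show ?thesis
  proof (cases "uq \<le> up")
    case True
    have "w * exp up * (uq - up) \<le> 0" using True w eta
      by (simp add: mult_nonneg_nonpos)
    then show ?thesis using R0 s_def by simp
  next
    case False
    have w0: "w \<ge> 0" using w eta by linarith
    have "w * exp up * (uq - up) \<le> (1/eta) * (exp up * (uq - up))"
    proof -
      have "0 \<le> exp up * (uq - up)" using False by simp
      then have "w * (exp up * (uq - up)) \<le> (1/eta) * (exp up * (uq - up))"
        using w(2) by (rule mult_right_mono[rotated])
      then show ?thesis by (simp add: mult.assoc)
    qed
    moreover have "exp up * (uq - up) \<le> exp a * (exp s * (s + 1))"
    proof (cases "a \<le> up")
      case True
      have "exp up \<le> exp a * exp s" using up s_def by (simp add: exp_add[symmetric])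
      moreover have "uq - up \<le> s + 1" using uq True s_def by simp
      ultimately have "exp up * (uq - up) \<le> (exp a * exp s) * (s + 1)" using False s0
        by (intro mult_mono) auto
      then show ?thesis by (simp add: mult.assoc)
    next
      case False2: False
      define t where "t = a - up"
      have t0: "t > 0" using False2 t_def by simp
      have "exp up * (uq - up) \<le> exp up * (um - up)" using uq by simp
      also have "... = exp a * (exp (-t) * (s + t))"
      proof -
        have "exp a * exp (-t) = exp up" using t_def by (simp add: exp_add[symmetric])
        moreover have "um - up = s + t" using s_def t_def by simp
        ultimately show ?thesis by (metis mult.assoc)
      qed
      also have "... \<le> exp a * (s + 1)"
      proof -
        have "exp (-t) * s \<le> s" using s0 t0 by (intro mult_left_le_one_le) auto
        moreover have "exp (-t) * t \<le> 1"
        proof -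
          have "1 + t \<le> exp t" by (rule exp_ge_add_one_self) then have "t \<le> exp t" by linarith
          then show ?thesis by (simp add: exp_minus field_simps)
        qed
        ultimately have "exp (-t) * (s + t) \<le> s + 1" by (simp add: distrib_left)
        then show ?thesis by (intro mult_left_mono) auto
      qed
      also have "... \<le> exp a * (exp s * (s + 1))" using E1 by simp
      finally show ?thesis .
    qed
    ultimately show ?thesis using eta s_def
      by (smt (verit) mult_left_mono divide_pos_pos zero_less_one)
  qed
qed

lemma comb_bound:
  fixes C :: "'a set" and R :: "('a \<times> 'a) set" and u :: "'a \<Rightarrow> real" and w :: "'a \<times> 'a \<Rightarrow> real"
  assumes fin: "finite C" and finR: "finite R" and RC: "R \<subseteq> C \<times> C"
    and sc: "\<forall>y\<in>C. \<forall>y'\<in>C. (y, y') \<in> R\<^sup>*"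
    and eta: "eta > 0" and w: "\<forall>k\<in>R. eta \<le> w k \<and> w k \<le> 1/eta"
    and ym: "ym \<in> C" and M: "\<forall>y\<in>C. u y \<le> u ym"
    and y1: "y1 \<in> C" and big: "u y1 < u ym - sq K (card C)"
    and K: "K = (real (card R) / eta + 1) / eta"
  shows "(\<Sum>k\<in>R. w k * exp (u (fst k)) * (u (snd k) - u (fst k))) \<le> - exp (u ym - sq K (card C))"
proof -
  have K0: "K > 0"
  proof -
    have "real (card R) / eta \<ge> 0" using eta by simp
    then have "real (card R) / eta + 1 > 0" by linarith
    then show ?thesis using K eta by simp
  qed
  obtain j where j: "j < card C" and gap: "\<not> (\<exists>y\<in>C. u ym - sq K (Suc j) \<le> u y \<and> u y < u ym - sq K j)"
    using pigeon_gap[OF fin ym K0 M] by blast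
  define sj where "sj = sq K j"
  define g where "g = K * exp sj * (sj + 1)"
  have sj0: "sj \<ge> 0" using sq_nonneg K0 sj_def by simp
  have sqS: "sq K (Suc j) = sj + g" using sj_def g_def by simp
  define A where "A = {y\<in>C. u ym - sj \<le> u y}"
  have ymA: "ym \<in> A" using A_def ym sj0 by simp
  have finA: "finite A" using A_def fin by simp
  define a where "a = Min (u ` A)"
  have a_ge: "a \<ge> u ym - sj" unfolding a_def using finA ymA
    by (subst Min_ge_iff) (auto simp: A_def)
  have a_le: "a \<le> u ym" using a_def finA ymA by (auto intro: Min_le)
  have below: "a - u y > g" if "y \<in> C" "u y < a" for y
  proof -
    have "y \<notin> A" using that a_def finA by (meson Min_le finite_imageI image_eqI not_le)
    then have "u y < u ym - sj" using A_def that by auto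
    then have "u y < u ym - sq K (Suc j)" using gap that sj_def by force
    then show ?thesis using sqS a_ge by simp
  qed
  define s' where "s' = u ym - a"
  have s'0: "s' \<ge> 0" and s'le: "s' \<le> sj" using s'_def a_le a_ge by auto
  define E where "E = exp s' * (s' + 1)"
  have E1: "E \<ge> 1"
  proof -
    have "1 * 1 \<le> exp s' * (s' + 1)" using s'0 by (intro mult_mono) auto
    then show ?thesis using E_def by simp
  qed
  have g0: "g > 0" using g_def K0 sj0 by simp
  have gE: "g \<ge> K * E"
  proof -
    have "exp s' * (s' + 1) \<le> exp sj * (sj + 1)" using s'le s'0 by (intro mult_mono) auto
    then show ?thesis using g_def E_def K0 by (simp add: mult.assoc)
  qed
  have sqmono: "sq K (Suc j) \<le> sq K (card C)" using sq_mono[OF K0, of "Suc j" "card C"] j by linarith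
  have y1a: "\<not> a \<le> u y1" using big sqmono sqS a_ge g0 by linarith
  obtain p q where pq: "(p, q) \<in> R" "a \<le> u p" "\<not> a \<le> u q"
  proof -
    have "(ym, y1) \<in> R\<^sup>*" using sc ym y1 by blast
    then show ?thesis using rtrancl_cross[of ym y1 R "\<lambda>y. a \<le> u y"] a_le y1a that by blast
  qed
  have pC: "p \<in> C" and qC: "q \<in> C" using pq RC by auto
  define tm where "tm k = w k * exp (u (fst k)) * (u (snd k) - u (fst k))" for k
  have tm_le: "tm k \<le> (1/eta) * (exp a * E)" if "k \<in> R" for k
  proof -
    have "fst k \<in> C" "snd k \<in> C" using that RC by auto
    then show ?thesis unfolding tm_def E_def s'_def
      using term_bound[OF eta, of "w k" "u (fst k)" "u ym" "u (snd k)" a] w that M a_le by auto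
  qed
  have tm_pq: "tm (p, q) \<le> - (eta * exp a * g)"
  proof -
    have d: "u q - u p \<le> - g" using below[OF qC] pq by fastforce
    have "eta * exp a \<le> w (p, q) * exp (u p)" using w pq eta
      by (intro mult_mono) auto
    then have "w (p,q) * exp (u p) * (u q - u p) \<le> (eta * exp a) * (u q - u p)"
      using d g0 by (intro mult_right_mono_neg) auto
    also have "... \<le> (eta * exp a) * (- g)" using d eta by (intro mult_left_mono) auto
    finally show ?thesis unfolding tm_def by simp
  qed
  have "(\<Sum>k\<in>R. tm k) = tm (p,q) + (\<Sum>k\<in>R - {(p,q)}. tm k)"
    using finR pq(1) by (simp add: sum.remove)
  also have "... \<le> - (eta * exp a * g) + (\<Sum>k\<in>R - {(p,q)}. (1/eta) * (exp a * E))"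
    using tm_pq tm_le by (intro add_mono sum_mono) auto
  also have "... \<le> - (eta * exp a * g) + real (card R) * ((1/eta) * (exp a * E))"
  proof -
    have "real (card (R - {(p,q)})) \<le> real (card R)" using finR by (simp add: card_Diff_subset_Int)
    moreover have "0 \<le> (1/eta) * (exp a * E)" using eta E1 by simp
    ultimately have "real (card (R - {(p,q)})) * ((1/eta) * (exp a * E)) \<le> real (card R) * ((1/eta) * (exp a * E))"
      by (rule mult_right_mono)
    then show ?thesis by simp
  qed
  also have "... = exp a * (real (card R) * E / eta - eta * g)" by (simp add: algebra_simps)
  also have "... \<le> exp a * (-1)"
  proof -
    have "eta * g \<ge> eta * (K * E)" using gE eta by simp
    also have "eta * (K * E) = (real (card R)/eta + 1) * E" using K eta by simp
    also have "... = real (card R) * E / eta + E" by (simp add: algebra_simps)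
    finally have "real (card R) * E / eta - eta * g \<le> -1" using E1 by simp
    then show ?thesis by (intro mult_left_mono) auto
  qed
  also have "... \<le> - exp (u ym - sq K (card C))"
  proof -
    have "u ym - sq K (card C) \<le> a" using a_ge sqmono sqS g0 by linarith
    then show ?thesis by simp
  qed
  finally show ?thesis unfolding tm_def .
qed



lemma norm_equiv_span:
  fixes v :: "'k \<Rightarrow> 'a::euclidean_space" and I :: "'k set"
  assumes fin: "finite I"
  shows "\<exists>c0>0. \<forall>r\<in>span (v ` I). c0 * norm r \<le> (\<Sum>k\<in>I. \<bar>v k \<bullet> r\<bar>)"
proof -
  define T where "T = sphere 0 1 \<inter> span (v ` I)"
  define f where "f r = (\<Sum>k\<in>I. \<bar>v k \<bullet> r\<bar>)" for r
  have cT: "compact T" unfolding T_def by (intro compact_Int_closed) auto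
  have cf: "continuous_on T f" unfolding f_def by (intro continuous_intros)
  have hom: "f (c *\<^sub>R r) = \<bar>c\<bar> * f r" for c r
    unfolding f_def by (simp add: abs_mult sum_distrib_left)
  show ?thesis
  proof (cases "T = {}")
    case True
    have "r = 0" if "r \<in> span (v ` I)" for r
    proof (rule ccontr)
      assume "r \<noteq> 0"
      then have "(1 / norm r) *\<^sub>R r \<in> T" using that unfolding T_def
        by (simp add: span_mul)
      then show False using True by simp
    qed
    then show ?thesis by (intro exI[of _ 1]) fastforce
  next
    case False
    obtain r0 where r0: "r0 \<in> T" and min: "\<forall>r\<in>T. f r0 \<le> f r"
      using continuous_attains_inf[OF cT False cf] by blast
    have pos: "f r0 > 0"
    proof (rule ccontr)
      assume "\<not> f r0 > 0"
      then have "f r0 = 0" using f_def by (smt (verit) sum_nonneg abs_ge_zero)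
      then have z: "\<forall>k\<in>I. v k \<bullet> r0 = 0" unfolding f_def using fin
        by (subst (asm) sum_nonneg_eq_0_iff) auto
      have "orthogonal r0 r0"
        using r0 unfolding T_def
        by (intro orthogonal_to_span[of r0 "v ` I" r0]) (use z in \<open>auto simp: orthogonal_def inner_commute\<close>)
      then have "r0 = 0" by (simp add: orthogonal_def)
      then show False using r0 T_def by simp
    qed
    have "f r0 * norm r \<le> f r" if "r \<in> span (v ` I)" for r
    proof (cases "r = 0")
      case True then show ?thesis by (simp add: f_def)
    next
      case False
      have "(1 / norm r) *\<^sub>R r \<in> T" using that False unfolding T_def by (simp add: span_mul)
      then have "f r0 \<le> f ((1 / norm r) *\<^sub>R r)" using min by blast
      also have "... = f r / norm r" using hom by simp
      finally show ?thesis using False by (simp add: field_simps)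
    qed
    then show ?thesis using pos by (intro exI[of _ "f r0"]) (auto simp: f_def)
  qed
qed

lemma coord_h:
  fixes d A b :: real assumes d: "d > 0" and A: "A \<ge> 0"
  shows "\<exists>\<beta> Bb. \<beta> \<ge> 0 \<and> Bb \<ge> 0 \<and> (\<forall>x\<ge>d. (x-b)*ln x - A*\<bar>x-b\<bar> \<ge> -\<beta> \<and> (x \<ge> Bb \<longrightarrow> (x-b)*ln x - A*\<bar>x-b\<bar> \<ge> x - b))"
proof -
  define Bb where "Bb = max (max b 1) (exp (A+1))"
  define \<beta> where "\<beta> = (Bb + \<bar>b\<bar>) * (\<bar>ln d\<bar> + \<bar>ln Bb\<bar> + A)"
  have Bb1: "Bb \<ge> 1" using Bb_def by simp
  have \<beta>0: "\<beta> \<ge> 0" using \<beta>_def Bb1 A by simp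
  have main: "(x-b)*ln x - A*\<bar>x-b\<bar> \<ge> -\<beta> \<and> (x \<ge> Bb \<longrightarrow> (x-b)*ln x - A*\<bar>x-b\<bar> \<ge> x - b)" if x: "x \<ge> d" for x
  proof (cases "x \<ge> Bb")
    case True
    have xb: "x - b \<ge> 0" using True Bb_def by simp
    have x0: "x > 0" using True Bb1 by simp
    have "ln x \<ge> ln (exp (A+1))" using True Bb_def x0 by (subst ln_le_cancel_iff) auto
    then have lx: "ln x - A \<ge> 1" by simp
    have "(x-b)*ln x - A*\<bar>x-b\<bar> = (x-b)*(ln x - A)" using xb by (simp add: algebra_simps)
    also have "... \<ge> (x-b)*1" using xb lx by (intro mult_left_mono) auto
    finally show ?thesis using xb \<beta>0 by simp
  next
    case False
    have x0: "x > 0" using x d by simp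
    have "ln d \<le> ln x" using x d by simp
    moreover have "ln x \<le> ln Bb" using False x0 by simp
    ultimately have lx: "\<bar>ln x\<bar> \<le> \<bar>ln d\<bar> + \<bar>ln Bb\<bar>" by linarith
    have xb: "\<bar>x - b\<bar> \<le> Bb + \<bar>b\<bar>" using False x0 by linarith
    have "\<bar>(x-b)*ln x\<bar> \<le> (Bb + \<bar>b\<bar>) * (\<bar>ln d\<bar> + \<bar>ln Bb\<bar>)"
      unfolding abs_mult using lx xb by (intro mult_mono) auto
    moreover have "A*\<bar>x-b\<bar> \<le> (Bb + \<bar>b\<bar>) * A" using xb A by (simp add: mult.commute mult_left_mono)
    ultimately have "(x-b)*ln x - A*\<bar>x-b\<bar> \<ge> -\<beta>" unfolding \<beta>_def by (simp add: algebra_simps) linarith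
    then show ?thesis using False by simp
  qed
  show ?thesis using main \<beta>0 Bb1 by (intro exI[of _ \<beta>] exI[of _ Bb]) auto
qed

lemma coord_bound:
  fixes b :: "real ^ 'n::finite" and d A :: real
  assumes d: "d > 0" and A: "A \<ge> 0"
  shows "\<exists>X. \<forall>x. (\<forall>i. x$i \<ge> d) \<and> (\<Sum>i\<in>UNIV. (x$i - b$i)*ln (x$i)) \<le> A * (\<Sum>i\<in>UNIV. \<bar>x$i - b$i\<bar>) \<longrightarrow> (\<forall>i. x$i \<le> X)"
proof -
  have "\<forall>i. \<exists>\<beta> Bb. \<beta> \<ge> 0 \<and> Bb \<ge> 0 \<and> (\<forall>x\<ge>d. (x-b$i)*ln x - A*\<bar>x-b$i\<bar> \<ge> -\<beta> \<and> (x \<ge> Bb \<longrightarrow> (x-b$i)*ln x - A*\<bar>x-b$i\<bar> \<ge> x - b$i))"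
    using coord_h[OF d A] by blast
  then obtain \<beta> Bb where hb: "\<And>i. \<beta> i \<ge> 0 \<and> Bb i \<ge> 0 \<and> (\<forall>x\<ge>d. (x-b$i)*ln x - A*\<bar>x-b$i\<bar> \<ge> -\<beta> i \<and> (x \<ge> Bb i \<longrightarrow> (x-b$i)*ln x - A*\<bar>x-b$i\<bar> \<ge> x - b$i))"
    by metis
  define \<beta>s where "\<beta>s = (\<Sum>i\<in>UNIV. \<beta> i)"
  define X where "X = (\<Sum>i\<in>UNIV. Bb i) + (\<Sum>i\<in>UNIV. \<bar>b$i\<bar>) + \<beta>s + 1"
  have "x$i \<le> X" if xd: "\<forall>i. x$i \<ge> d" and ineq: "(\<Sum>i\<in>UNIV. (x$i - b$i)*ln (x$i)) \<le> A * (\<Sum>i\<in>UNIV. \<bar>x$i - b$i\<bar>)" for x i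
  proof (rule ccontr)
    assume "\<not> x$i \<le> X"
    then have xi: "x$i > X" by simp
    define h where "h j = (x$j - b$j)*ln (x$j) - A*\<bar>x$j - b$j\<bar>" for j
    have sumh: "(\<Sum>j\<in>UNIV. h j) \<le> 0" using ineq unfolding h_def
      by (simp add: sum_subtractf sum_distrib_left)
    have Bbi: "Bb i \<le> (\<Sum>j\<in>UNIV. Bb j)" using hb by (intro member_le_sum) auto
    have bi: "\<bar>b$i\<bar> \<le> (\<Sum>j\<in>UNIV. \<bar>b$j\<bar>)" by (intro member_le_sum) auto
    have bs0: "\<beta>s \<ge> 0" unfolding \<beta>s_def using hb by (intro sum_nonneg) auto
    have absb: "b$i \<le> \<bar>b$i\<bar>" by simp
    have "x$i \<ge> Bb i" using xi X_def Bbi bi bs0 by linarith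
    then have hi: "h i \<ge> x$i - b$i" using hb[of i] xd unfolding h_def by blast
    have hj: "h j \<ge> - \<beta> j" for j using hb[of j] xd unfolding h_def by blast
    have "(\<Sum>j\<in>UNIV. h j) = h i + (\<Sum>j\<in>UNIV - {i}. h j)" by (simp add: sum.remove)
    also have "... \<ge> h i + (\<Sum>j\<in>UNIV - {i}. - \<beta> j)" using hj by (intro add_left_mono sum_mono) auto
    finally have "(\<Sum>j\<in>UNIV. h j) \<ge> h i - (\<Sum>j\<in>UNIV - {i}. \<beta> j)" by (simp add: sum_negf)
    moreover have "(\<Sum>j\<in>UNIV - {i}. \<beta> j) \<le> \<beta>s" unfolding \<beta>s_def using hb by (intro sum_mono2) auto
    moreover have "x$i - b$i > \<beta>s" using xi X_def Bbi bi bs0 absb hb[of i] by linarith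
    ultimately show False using sumh hi by linarith
  qed
  then show ?thesis by blast
qed



definition Lg :: "real ^ 'n::finite \<Rightarrow> real ^ 'n" where
  "Lg x = (\<chi> i. ln (x $ i))"

definition Wf :: "real ^ 'n::finite \<Rightarrow> real" where
  "Wf x = (\<Sum>i\<in>UNIV. x$i * ln (x$i) - x$i)"

lemma W_step1:
  fixes x z :: real assumes "x > 0" "z > 0"
  shows "(z * ln z - z) - (x * ln x - x) \<le> ln z * (z - x)"
proof -
  have "ln (z / x) \<le> z / x - 1" using assms by (intro ln_le_minus_one) auto
  then have "x * ln (z / x) \<le> x * (z / x - 1)" using assms by (intro mult_left_mono) auto
  moreover have "ln (z / x) = ln z - ln x" using assms by (simp add: ln_div)
  moreover have "x * (z / x - 1) = z - x" using assms by (simp add: field_simps)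
  ultimately have "x * (ln z - ln x) \<le> z - x" by simp
  then show ?thesis by (simp add: algebra_simps)
qed

lemma W_step:
  assumes "\<forall>i. x$i > 0" "\<forall>i. z$i > 0"
  shows "Wf z - Wf x \<le> Lg z \<bullet> (z - x)"
proof -
  have "Wf z - Wf x = (\<Sum>i\<in>UNIV. (z$i * ln (z$i) - z$i) - (x$i * ln (x$i) - x$i))"
    unfolding Wf_def by (simp add: sum_subtractf)
  also have "... \<le> (\<Sum>i\<in>UNIV. ln (z$i) * (z$i - x$i))"
    using assms W_step1 by (intro sum_mono) auto
  also have "... = Lg z \<bullet> (z - x)" unfolding Lg_def inner_vec_def by simp
  finally show ?thesis .
qed

lemma xlnx_ge1: "x > 0 \<Longrightarrow> x * ln x - x \<ge> - (1::real)"
proof -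
  assume x: "x > 0"
  have "ln (1/x) \<le> 1/x - 1" using x by (intro ln_le_minus_one) auto
  then have "x * (- ln x) \<le> x * (1/x - 1)" using x by (intro mult_left_mono) (auto simp: ln_div)
  moreover have "x * (1/x - 1) = 1 - x" using x by (simp add: field_simps)
  ultimately show ?thesis by (simp add: algebra_simps)
qed

lemma xlnx_ge2: "x > 0 \<Longrightarrow> x * ln x - x \<ge> x - exp (2::real)"
proof -
  assume x: "x > 0"
  have "ln (exp 2 / x) \<le> exp 2 / x - 1" using x by (intro ln_le_minus_one) auto
  then have "2 - ln x \<le> exp 2 / x - 1" using x by (simp add: ln_div)
  then have "x * (3 - exp 2 / x) \<le> x * ln x" using x by (intro mult_left_mono) auto
  moreover have "x * (3 - exp 2 / x) = 3 * x - exp 2" using x by (simp add: field_simps)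
  ultimately have "3 * x - exp 2 \<le> x * ln x" by simp
  then show ?thesis using x by linarith
qed

lemma Wf_lower: "\<forall>j. x$j > 0 \<Longrightarrow> x$i \<le> Wf x + exp 2 + real CARD('n)" for x :: "real ^ 'n::finite"
proof -
  assume x: "\<forall>j. x$j > 0"
  have "x$i * ln (x$i) - x$i + 1 \<le> (\<Sum>j\<in>UNIV. x$j * ln (x$j) - x$j + 1)"
  proof (intro member_le_sum)
    fix j assume "j \<in> UNIV - {i}"
    have "x$j > 0" using x by blast
    then show "0 \<le> x$j * ln (x$j) - x$j + 1" using xlnx_ge1[of "x$j"] by linarith
  qed auto
  also have "... = Wf x + real CARD('n)" unfolding Wf_def by (simp add: sum.distrib)
  moreover have "x$i > 0" using x by blast
  ultimately show ?thesis using xlnx_ge2[of "x$i"] by linarith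
qed

lemma Wf_ge: "\<forall>j. x$j > 0 \<Longrightarrow> Wf x \<ge> - real CARD('n)" for x :: "real ^ 'n::finite"
proof -
  assume x: "\<forall>j. x$j > 0"
  have "(\<Sum>j\<in>(UNIV::'n set). - 1) \<le> Wf x" unfolding Wf_def using x xlnx_ge1 by (intro sum_mono) auto
  then show ?thesis by simp
qed

lemma Wf_upper: "\<forall>j. x$j > 0 \<Longrightarrow> Wf x \<le> norm x ^ 2" for x :: "real ^ 'n::finite"
proof -
  assume x: "\<forall>j. x$j > 0"
  have "x$j * ln (x$j) - x$j \<le> x$j * x$j" for j
  proof -
    have "ln (x$j) \<le> x$j - 1" using x by (intro ln_le_minus_one) auto
    then have "x$j * ln (x$j) \<le> x$j * (x$j - 1)" using x by (intro mult_left_mono) (auto simp: less_imp_le)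
    then show ?thesis using x by (simp add: algebra_simps) (smt (verit) x)
  qed
  then have "Wf x \<le> (\<Sum>j\<in>UNIV. x$j * x$j)" unfolding Wf_def by (intro sum_mono) auto
  also have "... = norm x ^ 2" by (simp add: power2_norm_eq_inner inner_vec_def)
  finally show ?thesis .
qed

lemma decrease:
  fixes \<phi> :: "real \<Rightarrow> real^'n::finite" and f :: "real \<Rightarrow> real^'n"
  assumes le: "t0 \<le> t1"
    and pos: "\<forall>s\<in>{t0..t1}. \<forall>i. \<phi> s $ i > 0"
    and cont: "continuous_on {t0..t1} \<phi>"
    and integ: "\<forall>a b. t0 \<le> a \<longrightarrow> a \<le> b \<longrightarrow> b \<le> t1 \<longrightarrow> (f has_integral (\<phi> b - \<phi> a)) {a..b}"
    and Mf: "\<forall>s\<in>{t0..t1}. norm (f s) \<le> Mf"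
    and Bd: "\<forall>s\<in>{t0..t1}. Lg (\<phi> s) \<bullet> f s \<le> Bd"
  shows "Wf (\<phi> t1) - Wf (\<phi> t0) \<le> Bd * (t1 - t0)"
proof -
  have Mf0: "Mf \<ge> 0" using Mf le by (meson atLeastAtMost_iff norm_ge_zero order.trans order_refl)
  have contL: "continuous_on {t0..t1} (\<lambda>s. Lg (\<phi> s))"
    unfolding Lg_def using pos
    by (intro continuous_intros cont) (metis atLeastAtMost_iff less_irrefl)
  have uc: "uniformly_continuous_on {t0..t1} (\<lambda>s. Lg (\<phi> s))"
    using compact_uniformly_continuous[OF contL] by simp
  have key: "Wf (\<phi> t1) - Wf (\<phi> t0) \<le> (Bd + e) * (t1 - t0)" if e: "e > 0" for e
  proof -
    define e' where "e' = e / (Mf + 1)"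
    have e': "e' > 0" using e Mf0 e'_def by simp
    obtain d where d: "d > 0" and dd: "\<forall>s\<in>{t0..t1}. \<forall>s'\<in>{t0..t1}. dist s' s < d \<longrightarrow> dist (Lg (\<phi> s')) (Lg (\<phi> s)) < e'"
      using uc e' unfolding uniformly_continuous_on_def by metis
    define n :: nat where "n = Suc (nat (ceiling ((t1 - t0) / d)))"
    have n0: "n > 0" using n_def by simp
    have "(t1 - t0) / d < real n" unfolding n_def by linarith
    then have hd: "(t1 - t0) / real n < d" using d n0 by (simp add: field_simps)
    define h where "h = (t1 - t0) / real n"
    have h0: "h \<ge> 0" using le h_def by simp
    define tt where "tt j = t0 + real j * h" for j :: nat
    have tt0: "tt 0 = t0" and ttn: "tt n = t1" using tt_def h_def n0 by auto
    have ttin: "tt j \<in> {t0..t1}" if "j \<le> n" for j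
    proof -
      have "real j * h \<le> real n * h" using that h0 by (intro mult_right_mono) auto
      then show ?thesis using tt_def h0 ttn by (auto simp: tt_def)
    qed
    have ttS: "tt (Suc j) = tt j + h" for j by (simp add: tt_def algebra_simps)
    have step: "Wf (\<phi> (tt (Suc j))) - Wf (\<phi> (tt j)) \<le> (Bd + e) * h" if j: "j < n" for j
    proof -
      define a where "a = tt j"
      define b where "b = tt (Suc j)"
      have a: "a \<in> {t0..t1}" and b: "b \<in> {t0..t1}" using ttin j a_def b_def by auto
      have ab: "a \<le> b" and bah: "b - a = h" using ttS h0 a_def b_def by auto
      have "Wf (\<phi> b) - Wf (\<phi> a) \<le> Lg (\<phi> b) \<bullet> (\<phi> b - \<phi> a)"
        using pos a b by (intro W_step) auto
      moreover have I1: "((\<lambda>s. Lg (\<phi> b) \<bullet> f s) has_integral (Lg (\<phi> b) \<bullet> (\<phi> b - \<phi> a))) {a..b}"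
        using has_integral_linear[OF integ[rule_format, of a b] bounded_linear_inner_right[of "Lg (\<phi> b)"]] a b ab
        by (simp add: o_def)
      moreover have I2: "((\<lambda>s. Bd + e) has_integral ((Bd + e) * h)) {a..b}"
        using has_integral_const_real[of "Bd + e" a b] ab bah by (simp add: content_real mult.commute)
      moreover have "Lg (\<phi> b) \<bullet> f s \<le> Bd + e" if s: "s \<in> {a..b}" for s
      proof -
        have sin: "s \<in> {t0..t1}" using s a b by auto
        have "dist b s < d" using s bah hd h_def by (auto simp: dist_real_def)
        then have nl: "norm (Lg (\<phi> b) - Lg (\<phi> s)) < e'" using dd b sin by (auto simp: dist_norm)
        have "Lg (\<phi> b) \<bullet> f s = Lg (\<phi> s) \<bullet> f s + (Lg (\<phi> b) - Lg (\<phi> s)) \<bullet> f s"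
          by (simp add: inner_diff_left)
        also have "... \<le> Bd + norm (Lg (\<phi> b) - Lg (\<phi> s)) * norm (f s)"
          using Bd sin Cauchy_Schwarz_ineq2[of "Lg (\<phi> b) - Lg (\<phi> s)" "f s"] by (intro add_mono) auto
        also have "... \<le> Bd + e' * Mf"
          using nl Mf sin e' by (intro add_left_mono mult_mono) auto
        also have "... \<le> Bd + e"
        proof -
          have "e' * Mf \<le> e' * (Mf + 1)" using e' by simp
          also have "... = e" using e'_def Mf0 by simp
          finally show ?thesis by simp
        qed
        finally show ?thesis .
      qed
      ultimately have "Wf (\<phi> b) - Wf (\<phi> a) \<le> (Bd + e) * h"
        using has_integral_le[OF I1 I2] by fastforce
      then show ?thesis using a_def b_def by simp
    qed
    have "Wf (\<phi> t1) - Wf (\<phi> t0) = (\<Sum>j<n. Wf (\<phi> (tt (Suc j))) - Wf (\<phi> (tt j)))"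
      using sum_lessThan_telescope[of "\<lambda>j. Wf (\<phi> (tt j))" n] tt0 ttn by simp
    also have "... \<le> (\<Sum>j<n. (Bd + e) * h)" using step by (intro sum_mono) auto
    also have "... = (Bd + e) * (t1 - t0)" using h_def n0 by simp
    finally show ?thesis .
  qed
  show ?thesis
  proof (cases "t0 = t1")
    case True then show ?thesis by simp
  next
    case False
    then have lt: "t1 - t0 > 0" using le by simp
    show ?thesis
    proof (rule ccontr)
      assume "\<not> ?thesis"
      then have g: "Wf (\<phi> t1) - Wf (\<phi> t0) - Bd * (t1 - t0) > 0" by simp
      define e where "e = (Wf (\<phi> t1) - Wf (\<phi> t0) - Bd * (t1 - t0)) / (2 * (t1 - t0))"
      have "e > 0" using g lt e_def by simp
      from key[OF this] have k: "Wf (\<phi> t1) - Wf (\<phi> t0) \<le> Bd * (t1 - t0) + e * (t1 - t0)" by (simp add: algebra_simps)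
      have ee: "e * (t1 - t0) = (Wf (\<phi> t1) - Wf (\<phi> t0) - Bd * (t1 - t0)) / 2"
        unfolding e_def using lt by (simp add: field_simps del: left_diff_distrib right_diff_distrib)
      have r: "\<And>X Y :: real. X \<le> Y + (X - Y) / 2 \<Longrightarrow> 0 < X - Y \<Longrightarrow> False" by (auto simp: field_simps)
      show False using r[of "Wf (\<phi> t1) - Wf (\<phi> t0)" "Bd * (t1 - t0)"] k ee g by simp
    qed
  qed
qed



definition vk :: "('n::finite) reaction \<Rightarrow> real ^ 'n" where
  "vk k = cvec (snd k) - cvec (fst k)"

definition uu :: "real ^ 'n::finite \<Rightarrow> nat ^ 'n \<Rightarrow> real" where
  "uu x y = cvec y \<bullet> Lg x"

lemma stoich_vk: "stoich_subspace R = span (vk ` R)"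
  unfolding stoich_subspace_def vk_def by simp

lemma monomial_exp: "\<forall>i. x$i > 0 \<Longrightarrow> monomial x y = exp (uu x y)"
proof -
  assume x: "\<forall>i. x$i > 0"
  have "monomial x y = (\<Prod>i\<in>UNIV. exp (real (y$i) * ln (x$i)))"
    unfolding monomial_def using x by (intro prod.cong refl) (simp add: exp_of_nat_mult)
  also have "... = exp (\<Sum>i\<in>UNIV. real (y$i) * ln (x$i))" by (simp add: exp_sum)
  also have "... = exp (uu x y)" unfolding uu_def cvec_def Lg_def inner_vec_def by simp
  finally show ?thesis .
qed

lemma inner_field: "z \<bullet> mass_action_field R \<kappa> t x = (\<Sum>k\<in>R. \<kappa> k t * monomial x (fst k) * (vk k \<bullet> z))"
  unfolding mass_action_field_def vk_def by (simp add: inner_sum_right inner_commute)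

lemma vk_Lg: "vk k \<bullet> Lg x = uu x (snd k) - uu x (fst k)"
  unfolding vk_def uu_def by (simp add: inner_diff_left)

lemma field_in_S: "mass_action_field R \<kappa> t x \<in> stoich_subspace R"
  unfolding mass_action_field_def stoich_subspace_def
  by (intro span_sum span_mul span_base) auto

lemma region:
  fixes C :: "('n::finite) complex_vec set" and R :: "'n reaction set"
    and \<kappa> :: "'n reaction \<Rightarrow> real \<Rightarrow> real" and \<eta> \<delta> :: real and b :: "real ^ 'n"
  assumes net: "reaction_network C R"
    and sc: "\<forall>y\<in>C. \<forall>y'\<in>C. (y, y') \<in> R\<^sup>*"
    and eta: "\<eta> > 0" and kap: "\<forall>k\<in>R. \<forall>t\<ge>0. \<eta> < \<kappa> k t \<and> \<kappa> k t < 1/\<eta>"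
    and d: "\<delta> > 0"
  shows "\<exists>R0 c. R0 \<ge> 0 \<and> c > 0 \<and> (\<forall>x t. x - b \<in> stoich_subspace R \<and> (\<forall>i. x$i \<ge> \<delta>) \<and> norm x > R0 \<and> t \<ge> 0
            \<longrightarrow> Lg x \<bullet> mass_action_field R \<kappa> t x \<le> -c)"
proof -
  have fin: "finite C" and finR: "finite R" and RC: "R \<subseteq> C \<times> C" and spec: "\<forall>i. \<exists>y\<in>C. y $ i > 0"
    using net unfolding reaction_network_def by auto
  obtain y0 where y0: "y0 \<in> C" using spec by blast
  define K where "K = (real (card R) / \<eta> + 1) / \<eta>"
  have K0: "K > 0"
  proof -
    have "real (card R) / \<eta> \<ge> 0" using eta by simp
    then have "real (card R) / \<eta> + 1 > 0" by linarith
    then show ?thesis using K_def eta by simp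
  qed
  define B where "B = sq K (card C)"
  have B0: "B \<ge> 0" using B_def sq_nonneg K0 by simp
  obtain c0 where c0: "c0 > 0" and c0b: "\<forall>r\<in>span (vk ` R). c0 * norm r \<le> (\<Sum>k\<in>R. \<bar>vk k \<bullet> r\<bar>)"
    using norm_equiv_span[OF finR, of vk] by blast
  define A where "A = real (card R) * B / c0"
  have A0: "A \<ge> 0" using A_def B0 c0 by simp
  obtain X where X: "\<forall>x. (\<forall>i. x$i \<ge> \<delta>) \<and> (\<Sum>i\<in>UNIV. (x$i - b$i)*ln (x$i)) \<le> A * (\<Sum>i\<in>UNIV. \<bar>x$i - b$i\<bar>) \<longrightarrow> (\<forall>i. x$i \<le> X)"
    using coord_bound[OF d A0, of b] by blast
  define R0 where "R0 = real CARD('n) * \<bar>X\<bar>"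
  define m0 where "m0 = (\<Sum>i\<in>UNIV. real (y0$i) * min (ln \<delta>) 0)"
  define c where "c = exp (m0 - B)"
  have main: "Lg x \<bullet> mass_action_field R \<kappa> t x \<le> -c"
    if xS: "x - b \<in> stoich_subspace R" and xd: "\<forall>i. x$i \<ge> \<delta>" and xn: "norm x > R0" and t: "t \<ge> 0" for x t
  proof -
    have xpos: "\<forall>i. x$i > 0" using xd d by (meson less_le_trans)
    have bigk: "\<exists>k\<in>R. \<bar>vk k \<bullet> Lg x\<bar> > B"
    proof (rule ccontr)
      assume "\<not> ?thesis"
      then have allk: "\<forall>k\<in>R. \<bar>vk k \<bullet> Lg x\<bar> \<le> B" by auto
      obtain r z where r: "r \<in> span (vk ` R)" and z: "\<And>w. w \<in> span (vk ` R) \<Longrightarrow> orthogonal z w"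
        and rz: "Lg x = r + z"
        using orthogonal_subspace_decomp_exists[of "vk ` R" "Lg x"] by blast
      have dS: "x - b \<in> span (vk ` R)" using xS stoich_vk by metis
      have vr: "vk k \<bullet> r = vk k \<bullet> Lg x" if "k \<in> R" for k
      proof -
        have "orthogonal z (vk k)" using z that by (simp add: span_base)
        then have "vk k \<bullet> z = 0" by (simp add: orthogonal_def inner_commute)
        then show ?thesis using rz by (simp add: inner_add_right)
      qed
      have "c0 * norm r \<le> (\<Sum>k\<in>R. \<bar>vk k \<bullet> r\<bar>)" using c0b r by blast
      also have "... = (\<Sum>k\<in>R. \<bar>vk k \<bullet> Lg x\<bar>)" using vr by simp
      also have "... \<le> real (card R) * B" using allk sum_bounded_above[of R "\<lambda>k. \<bar>vk k \<bullet> Lg x\<bar>" B] by simp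
      finally have nr: "norm r \<le> A" unfolding A_def using c0 by (simp add: field_simps)
      have "(x - b) \<bullet> Lg x = (x - b) \<bullet> r"
      proof -
        have "orthogonal z (x - b)" using z dS by blast
        then have "(x - b) \<bullet> z = 0" by (simp add: orthogonal_def inner_commute)
        then show ?thesis using rz by (simp add: inner_add_right)
      qed
      also have "... \<le> norm (x - b) * norm r" by (rule norm_cauchy_schwarz)
      also have "... \<le> norm (x - b) * A" using nr by (intro mult_left_mono) auto
      also have "... \<le> (\<Sum>i\<in>UNIV. \<bar>(x - b)$i\<bar>) * A" using A0 norm_le_l1_cart[of "x - b"] by (intro mult_right_mono) auto
      finally have ineq: "(\<Sum>i\<in>UNIV. (x$i - b$i)*ln (x$i)) \<le> A * (\<Sum>i\<in>UNIV. \<bar>x$i - b$i\<bar>)"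
        unfolding inner_vec_def Lg_def by (simp add: mult.commute)
      have xX: "\<forall>i. x$i \<le> X" using X xd ineq by blast
      have "norm x \<le> (\<Sum>i\<in>UNIV. \<bar>x$i\<bar>)" by (rule norm_le_l1_cart)
      also have "... \<le> (\<Sum>i\<in>(UNIV::'n set). \<bar>X\<bar>)" using xX xpos by (intro sum_mono) (smt (verit))
      also have "... = R0" unfolding R0_def by simp
      finally show False using xn by simp
    qed
    then obtain k where kR: "k \<in> R" and kB: "\<bar>vk k \<bullet> Lg x\<bar> > B" by blast
    have kC: "fst k \<in> C" "snd k \<in> C" using kR RC by auto
    obtain y1 y2 where y1: "y1 \<in> C" and y2: "y2 \<in> C" and y12: "uu x y2 - uu x y1 > B"
    proof (cases "vk k \<bullet> Lg x \<ge> 0")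
      case True then show ?thesis using that[of "fst k" "snd k"] kC kB vk_Lg[of k x] by auto
    next
      case False then show ?thesis using that[of "snd k" "fst k"] kC kB vk_Lg[of k x] by auto
    qed
    define mx where "mx = Max (uu x ` C)"
    have "mx \<in> uu x ` C" unfolding mx_def using fin y1 by (intro Max_in) auto
    then obtain ym where ym: "ym \<in> C" and ymx: "uu x ym = mx" by auto
    have M: "\<forall>y\<in>C. uu x y \<le> uu x ym" using ymx mx_def fin by auto
    have big: "uu x y1 < uu x ym - sq K (card C)" using y12 M y2 B_def by fastforce
    have w: "\<forall>k\<in>R. \<eta> \<le> \<kappa> k t \<and> \<kappa> k t \<le> 1/\<eta>" using kap t by (meson less_imp_le)
    have cb: "(\<Sum>k\<in>R. \<kappa> k t * exp (uu x (fst k)) * (uu x (snd k) - uu x (fst k))) \<le> - exp (uu x ym - sq K (card C))"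
      using comb_bound[OF fin finR RC sc eta w ym M y1 big K_def] .
    have eq: "Lg x \<bullet> mass_action_field R \<kappa> t x = (\<Sum>k\<in>R. \<kappa> k t * exp (uu x (fst k)) * (uu x (snd k) - uu x (fst k)))"
      unfolding inner_field using xpos by (intro sum.cong refl) (simp add: monomial_exp vk_Lg)
    have "uu x y0 \<ge> m0"
    proof -
      have "uu x y0 = (\<Sum>i\<in>UNIV. real (y0$i) * ln (x$i))" unfolding uu_def cvec_def Lg_def inner_vec_def by simp
      moreover have "real (y0$i) * min (ln \<delta>) 0 \<le> real (y0$i) * ln (x$i)" for i
      proof -
        have "\<delta> \<le> x$i" using xd by blast
        then have "ln \<delta> \<le> ln (x$i)" using d by simp
        then show ?thesis by (intro mult_left_mono) auto
      qed
      ultimately show ?thesis unfolding m0_def by (simp add: sum_mono)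
    qed
    then have "uu x ym - B \<ge> m0 - B" using M y0 by fastforce
    then have "- exp (uu x ym - B) \<le> -c" unfolding c_def by simp
    then show ?thesis using eq cb B_def by simp
  qed
  have "R0 \<ge> 0" "c > 0" unfolding R0_def c_def by auto
  then show ?thesis using main by blast
qed



lemma sol_int:
  assumes sol: "is_solution R \<kappa> x0 \<phi>" and a: "0 \<le> a" and ab: "a \<le> b"
  shows "((\<lambda>s. mass_action_field R \<kappa> s (\<phi> s)) has_integral (\<phi> b - \<phi> a)) {a..b}"
proof -
  define f where "f = (\<lambda>s. mass_action_field R \<kappa> s (\<phi> s))"
  have Ib: "(f has_integral (\<phi> b - x0)) {0..b}" and Ia: "(f has_integral (\<phi> a - x0)) {0..a}"
    using sol a ab unfolding is_solution_def f_def by (meson order.trans)+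
  have intb: "f integrable_on {0..b}" using Ib by blast
  have intab: "f integrable_on {a..b}" using integrable_subinterval_real[OF intb] a by auto
  have "integral {0..a} f + integral {a..b} f = integral {0..b} f"
    using Henstock_Kurzweil_Integration.integral_combine[OF a ab intb] .
  then have "integral {a..b} f = integral {0..b} f - integral {0..a} f" by (metis add_diff_cancel_left')
  also have "... = \<phi> b - \<phi> a" using integral_unique[OF Ia] integral_unique[OF Ib] by simp
  finally have "integral {a..b} f = \<phi> b - \<phi> a" .
  moreover have "(f has_integral integral {a..b} f) {a..b}" using intab by (rule integrable_integral)
  ultimately show ?thesis unfolding f_def by simp
qed


lemma sol_cont:
  assumes sol: "is_solution R \<kappa> x0 \<phi>" and a: "0 \<le> a"
  shows "continuous_on {a..b} \<phi>"
proof (cases "a \<le> b")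
  case False then show ?thesis by simp
next
  case True
  define f where "f s = mass_action_field R \<kappa> s (\<phi> s)" for s
  have "(f has_integral (\<phi> b - x0)) {0..b}" using sol a True unfolding is_solution_def f_def by simp
  then have intb: "f integrable_on {0..b}" by blast
  have eq: "\<phi> t = x0 + integral {0..t} f" if "t \<in> {0..b}" for t
  proof -
    have "(f has_integral (\<phi> t - x0)) {0..t}" using sol that unfolding is_solution_def f_def by auto
    then have "integral {0..t} f = \<phi> t - x0" by (rule integral_unique)
    then show ?thesis by simp
  qed
  have "continuous_on {0..b} (\<lambda>t. x0 + integral {0..t} f)"
    by (intro continuous_intros indefinite_integral_continuous_1 intb)
  then have "continuous_on {0..b} \<phi>" by (rule continuous_on_eq) (simp add: eq)
  then show ?thesis by (rule continuous_on_subset) (use a in auto)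
qed

lemma sol_S:
  assumes sol: "is_solution R \<kappa> x0 \<phi>" and t: "0 \<le> t"
  shows "\<phi> t - x0 \<in> stoich_subspace R"
proof -
  define f where "f s = mass_action_field R \<kappa> s (\<phi> s)" for s
  obtain r z where r: "r \<in> span (vk ` R)" and z: "\<And>w. w \<in> span (vk ` R) \<Longrightarrow> orthogonal z w"
    and rz: "\<phi> t - x0 = r + z"
    using orthogonal_subspace_decomp_exists[of "vk ` R" "\<phi> t - x0"] by blast
  have I: "(f has_integral (\<phi> t - x0)) {0..t}" using sol t unfolding is_solution_def f_def by auto
  have "((inner z \<circ> f) has_integral (z \<bullet> (\<phi> t - x0))) {0..t}"
    by (rule has_integral_linear[OF I bounded_linear_inner_right])
  moreover have "(inner z \<circ> f) = (\<lambda>s. 0)"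
  proof
    fix s
    have "f s \<in> span (vk ` R)" unfolding f_def using field_in_S stoich_vk by metis
    then show "(inner z \<circ> f) s = 0" using z by (simp add: orthogonal_def)
  qed
  ultimately have "z \<bullet> (\<phi> t - x0) = 0" by simp
  moreover have "z \<bullet> r = 0" using z r by (simp add: orthogonal_def)
  ultimately have "z \<bullet> z = 0" using rz by (simp add: inner_add_right)
  then have "z = 0" by simp
  then show ?thesis using rz r stoich_vk[of R] by simp
qed

lemma field_bounded:
  fixes \<phi> :: "real \<Rightarrow> real ^ 'n::finite"
  assumes cont: "continuous_on {a..b} \<phi>" and ab: "a \<le> b" and a: "0 \<le> a"
    and finR: "finite R" and eta: "\<eta> > 0"
    and kap: "\<forall>k\<in>R. \<forall>t\<ge>0. \<eta> < \<kappa> k t \<and> \<kappa> k t < 1/\<eta>"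
  shows "\<exists>Mf. \<forall>s\<in>{a..b}. norm (mass_action_field R \<kappa> s (\<phi> s)) \<le> Mf"
proof -
  define g where "g s = (\<Sum>k\<in>R. (1/\<eta>) * \<bar>monomial (\<phi> s) (fst k)\<bar> * norm (vk k))" for s
  have cm: "continuous_on {a..b} (\<lambda>s. monomial (\<phi> s) y)" for y
    unfolding monomial_def by (intro continuous_on_prod continuous_on_power continuous_on_component cont)
  have cg: "continuous_on {a..b} g" unfolding g_def
    by (intro continuous_on_sum continuous_on_mult continuous_on_const continuous_on_rabs cm)
  obtain s0 where "s0 \<in> {a..b}" and s0: "\<forall>s\<in>{a..b}. g s \<le> g s0"
    using continuous_attains_sup[OF compact_Icc _ cg] ab by auto
  have "norm (mass_action_field R \<kappa> s (\<phi> s)) \<le> g s" if s: "s \<in> {a..b}" for s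
  proof -
    have s0': "s \<ge> 0" using s a by auto
    have "norm (mass_action_field R \<kappa> s (\<phi> s)) \<le> (\<Sum>k\<in>R. norm ((\<kappa> k s * monomial (\<phi> s) (fst k)) *\<^sub>R vk k))"
      unfolding mass_action_field_def vk_def by (rule norm_sum)
    also have "... \<le> g s" unfolding g_def
    proof (intro sum_mono)
      fix k assume k: "k \<in> R"
      have "\<eta> < \<kappa> k s" "\<kappa> k s < 1/\<eta>" using kap k s0' by auto
      then have "\<bar>\<kappa> k s\<bar> \<le> 1/\<eta>" using eta by linarith
      then have "\<bar>\<kappa> k s\<bar> * (\<bar>monomial (\<phi> s) (fst k)\<bar> * norm (vk k)) \<le> (1/\<eta>) * (\<bar>monomial (\<phi> s) (fst k)\<bar> * norm (vk k))"
        by (intro mult_right_mono) auto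
      then show "norm ((\<kappa> k s * monomial (\<phi> s) (fst k)) *\<^sub>R vk k) \<le> (1/\<eta>) * \<bar>monomial (\<phi> s) (fst k)\<bar> * norm (vk k)"
        by (simp add: abs_mult mult.assoc)
    qed
    finally show ?thesis .
  qed
  then have "\<forall>s\<in>{a..b}. norm (mass_action_field R \<kappa> s (\<phi> s)) \<le> g s0"
    using s0 by (meson order_trans)
  then show ?thesis by blast
qed



lemma Wf_cont:
  assumes "continuous_on S \<phi>" "\<forall>s\<in>S. \<forall>i. (\<phi> s :: real ^ 'n::finite) $ i > 0"
  shows "continuous_on S (\<lambda>s. Wf (\<phi> s))"
  unfolding Wf_def using assms
  by (intro continuous_intros) (metis less_irrefl)+

theorem mainTheorem7:
  fixes C :: "('n::finite) complex_vec set"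
    and R :: "'n reaction set"
    and \<kappa> :: "'n reaction \<Rightarrow> real \<Rightarrow> real"
    and \<eta> \<delta> :: real
    and P :: "(real ^ 'n) set"
    and \<phi> :: "real ^ 'n \<Rightarrow> real \<Rightarrow> real ^ 'n"
  assumes "reaction_network C R"
    and "weakly_reversible C R"
    and "single_linkage_class C R"
    and "bounded_kinetics R \<kappa> \<eta>"
    and "positive_compat_class R P"
    and "\<forall>x0\<in>P. is_solution R \<kappa> x0 (\<phi> x0)"
    and "\<delta> > 0"
    and "\<forall>x0\<in>P. \<forall>i. Liminf at_top (\<lambda>t. ereal (\<phi> x0 t $ i)) > ereal \<delta>"
  shows "\<exists>\<rho>>0. \<forall>x0\<in>P. \<forall>i.
           ereal \<rho> < Liminf at_top (\<lambda>t. ereal (\<phi> x0 t $ i))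
         \<and> Liminf at_top (\<lambda>t. ereal (\<phi> x0 t $ i)) \<le> Limsup at_top (\<lambda>t. ereal (\<phi> x0 t $ i))
         \<and> Limsup at_top (\<lambda>t. ereal (\<phi> x0 t $ i)) < ereal (1 / \<rho>)"
proof -
  note net = assms(1)
  have finR: "finite R" using net unfolding reaction_network_def by auto
  have sc: "\<forall>y\<in>C. \<forall>y'\<in>C. (y, y') \<in> R\<^sup>*"
    using assms(2,3) unfolding weakly_reversible_def single_linkage_class_def by blast
  have eta: "\<eta> > 0" and kap: "\<forall>k\<in>R. \<forall>t\<ge>0. \<eta> < \<kappa> k t \<and> \<kappa> k t < 1/\<eta>"
    using assms(4) unfolding bounded_kinetics_def by auto
  obtain b where bpos: "\<forall>i. b $ i > 0" and Pdef: "P = {x. x - b \<in> stoich_subspace R \<and> (\<forall>i. x $ i > 0)}"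
    using assms(5) unfolding positive_compat_class_def by blast
  have d: "\<delta> > 0" using assms(7) .
  obtain R0 c where R0: "R0 \<ge> 0" and c: "c > 0"
    and reg: "\<forall>x t. x - b \<in> stoich_subspace R \<and> (\<forall>i. x$i \<ge> \<delta>) \<and> norm x > R0 \<and> t \<ge> 0
            \<longrightarrow> Lg x \<bullet> mass_action_field R \<kappa> t x \<le> -c"
    using region[OF net sc eta kap d, of b] by blast
  define \<Lambda> where "\<Lambda> = R0^2 + 1"
  define Bnd where "Bnd = \<Lambda> + exp 2 + real CARD('n)"
  define \<rho> where "\<rho> = min \<delta> (1 / (Bnd + 1))"
  have Bnd0: "Bnd > 0"
  proof -
    have "R0^2 \<ge> 0" by simp
    moreover have "exp (2::real) > 0" by simp
    ultimately show ?thesis unfolding Bnd_def \<Lambda>_def by linarith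
  qed
  have rho0: "\<rho> > 0" unfolding \<rho>_def using d Bnd0 by simp
  have rhoB: "1 / \<rho> \<ge> Bnd + 1"
  proof -
    have "\<rho> \<le> 1 / (Bnd + 1)" unfolding \<rho>_def by simp
    then have "1 / (1 / (Bnd + 1)) \<le> 1 / \<rho>" using rho0 Bnd0 by (intro divide_left_mono) auto
    then show ?thesis using Bnd0 by simp
  qed
  have WnR: "norm x > R0" if "\<forall>i. x$i > 0" "Wf x \<ge> \<Lambda>" for x :: "real ^ 'n"
  proof (rule ccontr)
    assume "\<not> norm x > R0"
    then have "norm x ^ 2 \<le> R0 ^ 2" using R0 by (intro power_mono) auto
    then show False using Wf_upper[OF that(1)] that(2) \<Lambda>_def by simp
  qed
  have per: "ereal \<delta> < Liminf at_top (\<lambda>t. ereal (\<phi> x0 t $ i))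
         \<and> Limsup at_top (\<lambda>t. ereal (\<phi> x0 t $ i)) \<le> ereal Bnd" if x0: "x0 \<in> P" for x0 i
  proof -
    define y where "y = \<phi> x0"
    have sol: "is_solution R \<kappa> x0 y" using assms(6) x0 y_def by blast
    have lim: "\<forall>j. ereal \<delta> < Liminf at_top (\<lambda>t. ereal (y t $ j))" using assms(8) x0 y_def by blast
    have "eventually (\<lambda>t. \<forall>j. ereal \<delta> < ereal (y t $ j)) at_top"
      using lim less_LiminfD by (intro eventually_all_finite) blast
    then obtain N where N: "\<forall>t\<ge>N. \<forall>j. \<delta> < y t $ j" unfolding eventually_at_top_linorder by auto
    define T0 where "T0 = max N 0"
    have T00: "T0 \<ge> 0" unfolding T0_def by simp
    have ypos: "\<forall>j. y t $ j > \<delta>" if "t \<ge> T0" for t using N that T0_def by auto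
    have x0b: "x0 - b \<in> stoich_subspace R" using x0 Pdef by auto
    have yS: "y t - b \<in> stoich_subspace R" if "t \<ge> 0" for t
    proof -
      have "y t - x0 \<in> stoich_subspace R" using sol_S[OF sol that] .
      then have "(y t - x0) + (x0 - b) \<in> stoich_subspace R" using x0b unfolding stoich_subspace_def
        by (rule span_add)
      then show ?thesis by simp
    qed
    have Dec: "Wf (y t1) - Wf (y t0) \<le> (-c) * (t1 - t0)"
      if t0: "T0 \<le> t0" and t01: "t0 \<le> t1" and nr: "\<forall>s\<in>{t0..t1}. norm (y s) > R0" for t0 t1
    proof -
      have t00: "0 \<le> t0" using t0 T00 by simp
      have cont: "continuous_on {t0..t1} y" using sol_cont[OF sol t00] .
      obtain Mf where Mf: "\<forall>s\<in>{t0..t1}. norm (mass_action_field R \<kappa> s (y s)) \<le> Mf"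
        using field_bounded[OF cont t01 t00 finR eta kap] by blast
      show ?thesis
      proof (rule decrease[OF t01 _ cont _ Mf])
        show "\<forall>s\<in>{t0..t1}. \<forall>i. 0 < y s $ i" using ypos t0 d by (meson atLeastAtMost_iff order.trans less_trans)
        show "\<forall>a b. t0 \<le> a \<longrightarrow> a \<le> b \<longrightarrow> b \<le> t1 \<longrightarrow> ((\<lambda>s. mass_action_field R \<kappa> s (y s)) has_integral y b - y a) {a..b}"
          using sol_int[OF sol] t00 by (meson order.trans)
        show "\<forall>s\<in>{t0..t1}. Lg (y s) \<bullet> mass_action_field R \<kappa> s (y s) \<le> - c"
        proof
          fix s assume s: "s \<in> {t0..t1}"
          have "s \<ge> T0" "s \<ge> 0" using s t0 t00 by auto
          then show "Lg (y s) \<bullet> mass_action_field R \<kappa> s (y s) \<le> - c"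
            using reg yS ypos nr s by (meson less_imp_le)
        qed
      qed
    qed
    have Wlow: "Wf (y t) \<ge> - real CARD('n)" if "t \<ge> T0" for t
      using Wf_ge ypos[OF that] d by (meson less_trans)
    have yp: "\<forall>j. y t $ j > 0" if "t \<ge> T0" for t using ypos[OF that] d by (meson less_trans)
    obtain ts where ts: "ts \<ge> T0" and Wts: "Wf (y ts) < \<Lambda>"
    proof (rule ccontr)
      assume "\<not> thesis"
      then have allge: "\<forall>t\<ge>T0. Wf (y t) \<ge> \<Lambda>" using that by (meson not_le)
      define t1 where "t1 = T0 + (Wf (y T0) + real CARD('n) + 1) / c"
      have t1ge: "t1 \<ge> T0" unfolding t1_def using Wlow[of T0] c by simp
      have "\<forall>s\<in>{T0..t1}. norm (y s) > R0" using allge WnR yp by auto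
      then have "Wf (y t1) - Wf (y T0) \<le> (-c) * (t1 - T0)" using Dec t1ge by simp
      also have "(-c) * (t1 - T0) = - (Wf (y T0) + real CARD('n) + 1)" unfolding t1_def using c by simp
      finally show False using Wlow[OF t1ge] by simp
    qed
    have stay: "Wf (y t) \<le> \<Lambda>" if t: "t \<ge> ts" for t
    proof (rule ccontr)
      assume "\<not> Wf (y t) \<le> \<Lambda>"
      then have gt: "Wf (y t) > \<Lambda>" by simp
      have contg: "continuous_on {ts..t} (\<lambda>s. Wf (y s))"
        using sol_cont[OF sol, of ts t] ts T00 yp by (intro Wf_cont) auto
      define Bs where "Bs = {s \<in> {ts..t}. Wf (y s) \<le> \<Lambda>}"
      have clB: "closed Bs" unfolding Bs_def
        by (intro continuous_on_closed_Collect_le contg continuous_on_const) auto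
      have tsB: "ts \<in> Bs" using Bs_def Wts t by auto
      have bdd: "bdd_above Bs" unfolding Bs_def by (rule bdd_aboveI[of _ t]) auto
      define s0 where "s0 = Sup Bs"
      have s0B: "s0 \<in> Bs" unfolding s0_def using closed_contains_Sup[OF _ bdd clB] tsB by blast
      have s0t: "s0 < t" using s0B gt Bs_def by (metis (mono_tags, lifting) atLeastAtMost_iff mem_Collect_eq not_le order_le_less)
      have s0ts: "ts \<le> s0" using s0B Bs_def by auto
      have above: "Wf (y s) > \<Lambda>" if "s \<in> {s0<..t}" for s
      proof (rule ccontr)
        assume "\<not> Wf (y s) > \<Lambda>"
        then have "s \<in> Bs" using that s0ts Bs_def by auto
        then have "s \<le> s0" unfolding s0_def using bdd by (rule cSup_upper)
        then show False using that by simp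
      qed
      define Ds where "Ds = {s \<in> {s0..t}. \<Lambda> \<le> Wf (y s)}"
      have clD: "closed Ds" unfolding Ds_def
        using continuous_on_subset[OF contg, of "{s0..t}"] s0ts
        by (intro continuous_on_closed_Collect_le continuous_on_const) auto
      have "{s0<..t} \<subseteq> Ds" unfolding Ds_def using above by (auto simp: less_imp_le)
      then have "closure {s0<..t} \<subseteq> Ds" using clD by (rule closure_minimal)
      then have DD: "{s0..t} \<subseteq> Ds" using s0t by simp
      have nr: "\<forall>s\<in>{s0..t}. norm (y s) > R0"
      proof
        fix s assume s: "s \<in> {s0..t}"
        then have "Wf (y s) \<ge> \<Lambda>" using DD Ds_def by auto
        moreover have "s \<ge> T0" using s s0ts ts by auto
        ultimately show "norm (y s) > R0" using WnR yp by blast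
      qed
      have "Wf (y t) - Wf (y s0) \<le> (-c) * (t - s0)" using Dec[OF _ _ nr] s0ts ts s0t by simp
      moreover have "(-c) * (t - s0) \<le> 0" using c s0t by simp
      moreover have "Wf (y s0) \<le> \<Lambda>" using s0B Bs_def by simp
      ultimately show False using gt by simp
    qed
    have "eventually (\<lambda>t. ereal (y t $ i) \<le> ereal Bnd) at_top"
      unfolding eventually_at_top_linorder
    proof (intro exI allI impI)
      fix t assume t: "t \<ge> ts"
      have "T0 \<le> t" using ts t by simp
      then have "y t $ i \<le> Wf (y t) + exp 2 + real CARD('n)" using Wf_lower[OF yp] by blast
      then show "ereal (y t $ i) \<le> ereal Bnd" using stay[OF t] Bnd_def by simp
    qed
    then have "Limsup at_top (\<lambda>t. ereal (y t $ i)) \<le> ereal Bnd" by (rule Limsup_bounded)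
    then show ?thesis using lim y_def by simp
  qed
  show ?thesis
  proof (intro exI[of _ \<rho>] conjI rho0 ballI allI)
    fix x0 i assume x0: "x0 \<in> P"
    have p: "ereal \<delta> < Liminf at_top (\<lambda>t. ereal (\<phi> x0 t $ i))"
      "Limsup at_top (\<lambda>t. ereal (\<phi> x0 t $ i)) \<le> ereal Bnd" using per[OF x0] by auto
    have "ereal \<rho> \<le> ereal \<delta>" unfolding \<rho>_def by simp
    then show "ereal \<rho> < Liminf at_top (\<lambda>t. ereal (\<phi> x0 t $ i))" using p(1) by (rule le_less_trans)
    show "Liminf at_top (\<lambda>t. ereal (\<phi> x0 t $ i)) \<le> Limsup at_top (\<lambda>t. ereal (\<phi> x0 t $ i))"
      by (rule Liminf_le_Limsup) simp
    have "ereal Bnd < ereal (1 / \<rho>)" using rhoB by simp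
    then show "Limsup at_top (\<lambda>t. ereal (\<phi> x0 t $ i)) < ereal (1 / \<rho>)" using p(2) by (rule le_less_trans[rotated])
  qed
qed


end
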